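(* Let $p$ be a prime, $q=p^n$, $d$ a natural number with $(d,p)=1$, $\psi$ a nontrivial additive character of $\mathbb{F}_p$, and $r$ a natural number with $r<d$. Let $\alpha\in\mathbb{F}_{q^r}$. Then the average of $\psi\left(\mathrm{Tr}_{\mathbb{F}_{q^r}/\mathbb{F}_p}f(\alpha)\right)$ over $f\in\mathcal{F}_d$ (uniform) equals $1$ if $\alpha=0$, or if $p\mid r$ and $\alpha\in\mathbb{F}_{q^{r/p}}$; and equals $0$ otherwise.
   Context: $\mathcal{F}_d$ denotes the set of polynomials $f=\sum_{i=0}^d a_ix^i\in\mathbb{F}_q[x]$ with $a_d\neq 0$ and $a_i=0$ for every $i\ge 0$ divisible by $p$. *)

theory Defs
  imports "HOL-Computational_Algebra.Polynomial" Complex_Main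
begin

text \<open>We work inside a finite field 'a of order q^r = p^(n*r).
  Subfields are described as fixed sets of Frobenius powers:
  F_{p^k} = {x. x^(p^k) = x}.\<close>

definition subfield_of_order :: "nat \<Rightarrow> 'a::field set" where
  "subfield_of_order m = {x. x ^ m = x}"

definition abs_trace :: "nat \<Rightarrow> nat \<Rightarrow> 'a::field \<Rightarrow> 'a" where
  "abs_trace p k x = (\<Sum>i<k. x ^ (p ^ i))"

definition additive_char_prime_field :: "nat \<Rightarrow> ('a::field \<Rightarrow> complex) \<Rightarrow> bool" where
  "additive_char_prime_field p \<psi> \<longleftrightarrow>
     (\<forall>x \<in> subfield_of_order p. \<psi> x \<noteq> 0) \<and>
     (\<forall>x \<in> subfield_of_order p. \<forall>y \<in> subfield_of_order p. \<psi> (x + y) = \<psi> x * \<psi> y)"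

definition nontrivial_on_prime_field :: "nat \<Rightarrow> ('a::field \<Rightarrow> complex) \<Rightarrow> bool" where
  "nontrivial_on_prime_field p \<psi> \<longleftrightarrow> (\<exists>x \<in> subfield_of_order p. \<psi> x \<noteq> 1)"

definition poly_family :: "nat \<Rightarrow> nat \<Rightarrow> nat \<Rightarrow> 'a::field poly set" where
  "poly_family p q d = {f. degree f = d \<and> coeff f d \<noteq> 0 \<and>
       (\<forall>i. coeff f i \<in> subfield_of_order q) \<and>
       (\<forall>i. p dvd i \<longrightarrow> coeff f i = 0)}"

end

theory Submission imports Defs "HOL-Computational_Algebra.Primes" begin

lemma ff_pow_card:
  fixes x :: "'a::{field,finite}"
  shows "x ^ card (UNIV :: 'a set) = x"
proof (cases "x = 0")
  case False
  have "x * (\<Prod>y\<in>UNIV-{0}. x * y) = x * x ^ (card (UNIV :: 'a set) - 1) * \<Prod>(UNIV-{0})"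
    by (simp add: prod.distrib mult_ac)
  also have "x * x ^ (card (UNIV :: 'a set) - 1) = x ^ Suc (card (UNIV :: 'a set) - 1)"
    by (subst power_Suc) auto
  also have "Suc (card (UNIV :: 'a set) - 1) = card (UNIV :: 'a set)"
    using finite_UNIV_card_ge_0[where ?'a = 'a] by simp
  also have "(\<Prod>y\<in>UNIV-{0}. x * y) = (\<Prod>y\<in>UNIV-{0}. y)"
    by (rule prod.reindex_bij_witness[of _ "\<lambda>y. y / x" "\<lambda>y. x * y"]) (use False in auto)
  finally show ?thesis
    by simp
qed (use finite_UNIV_card_ge_0[where ?'a = 'a] in auto)

lemma ff_char:
  assumes "prime p" and "card (UNIV :: 'a::{field,finite} set) = p ^ k"
  shows "CHAR('a) = p"
proof -
  have pos: "CHAR('a) > 0" by (rule finite_imp_CHAR_pos) simp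
  have pr: "prime CHAR('a)" using prime_CHAR_semidom[OF pos] .
  have "(\<Sum>y\<in>UNIV. (1::'a) + y) = (\<Sum>y\<in>UNIV. y)"
    by (rule sum.reindex_bij_witness[of _ "\<lambda>y. y - 1" "\<lambda>y. 1 + y"]) auto
  hence "of_nat (card (UNIV :: 'a set)) = (0::'a)" by (simp add: sum.distrib)
  hence "CHAR('a) dvd p ^ k" using assms(2) of_nat_eq_0_iff_char_dvd by metis
  hence "CHAR('a) dvd p" using pr prime_dvd_power by blast
  thus ?thesis using pr assms(1) by (simp add: primes_dvd_imp_eq)
qed

lemma frob_add:
  fixes x y :: "'a::field"
  assumes "CHAR('a) = p" "prime p"
  shows "(x + y) ^ (p ^ e) = x ^ (p ^ e) + y ^ (p ^ e)"
  using freshmans_dream'[of "p^e" e x y] assms by simp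

lemma frob_sum:
  fixes f :: "'b \<Rightarrow> 'a::field"
  assumes "CHAR('a) = p" "prime p"
  shows "sum f A ^ (p ^ e) = (\<Sum>i\<in>A. f i ^ (p ^ e))"
  using freshmans_dream_sum'[of "p^e" e f A] assms by simp

lemma frob_neg:
  fixes x :: "'a::field"
  assumes "CHAR('a) = p" "prime p"
  shows "(- x) ^ (p ^ e) = - (x ^ (p ^ e))"
proof -
  have "0 = (x + (-x)) ^ (p ^ e)" using assms(2) prime_gt_0_nat by simp
  also have "\<dots> = x ^ (p ^ e) + (-x) ^ (p ^ e)" by (rule frob_add[OF assms])
  finally show ?thesis by (simp add: eq_neg_iff_add_eq_0 add.commute)
qed

lemma fix_iter:
  fixes x :: "'a::field"
  assumes "x ^ m = x"
  shows "x ^ (m ^ t) = x"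
proof (induction t)
  case (Suc t)
  have "x ^ (m ^ Suc t) = (x ^ (m ^ t)) ^ m" by (metis power_Suc2 power_mult)
  thus ?case using Suc assms by simp
qed simp

lemma tr_fix:
  fixes y :: "'a::field"
  assumes "CHAR('a) = p" "prime p" "b = p ^ e" "y ^ (b ^ K) = y"
  shows "(\<Sum>i<K. y ^ (b ^ i)) ^ b = (\<Sum>i<K. y ^ (b ^ i))"
proof -
  have "(\<Sum>i<K. y ^ (b ^ i)) ^ b = (\<Sum>i<K. (y ^ (b ^ i)) ^ b)"
    using frob_sum[OF assms(1,2)] assms(3) by simp
  also have "\<dots> = (\<Sum>i<K. y ^ (b ^ Suc i))" by (simp add: power_mult mult.commute flip: power_mult)
  also have "\<dots> = (\<Sum>i<K. y ^ (b ^ i))"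
  proof -
    have "(\<Sum>i<Suc K. y ^ (b ^ i)) = y ^ (b^0) + (\<Sum>i<K. y ^ (b ^ Suc i))"
      by (rule sum.lessThan_Suc_shift)
    moreover have "(\<Sum>i<Suc K. y ^ (b ^ i)) = (\<Sum>i<K. y ^ (b ^ i)) + y ^ (b ^ K)" by simp
    ultimately show ?thesis using assms(4) by (simp add: add.commute)
  qed
  finally show ?thesis .
qed


lemma sum_periodic:
  fixes g :: "nat \<Rightarrow> 'a::comm_semiring_1"
  assumes "\<And>i. g (i + k) = g i"
  shows "(\<Sum>i<m*k. g i) = of_nat m * (\<Sum>i<k. g i)"
proof -
  have per: "g (i + j * k) = g i" for i j
    by (induction j) (simp_all add: assms add.assoc[symmetric] add.commute[of k])
  have "(\<Sum>i<m*k. g i) = (\<Sum>j<m. sum g {j*k..<j*k+k})"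
    by (rule sum.nat_group[symmetric])
  also have "\<dots> = (\<Sum>j<m. (\<Sum>i<k. g i))"
  proof (rule sum.cong[OF refl])
    fix j
    have "sum g {j*k..<j*k+k} = (\<Sum>i<k. g (i + j*k))"
      using sum.shift_bounds_nat_ivl[of g 0 "j*k" k] by (simp add: atLeast0LessThan add.commute)
    thus "sum g {j*k..<j*k+k} = (\<Sum>i<k. g i)" by (simp add: per)
  qed
  also have "\<dots> = of_nat m * (\<Sum>i<k. g i)" by simp
  finally show ?thesis .
qed

definition rtr :: "nat \<Rightarrow> nat \<Rightarrow> 'a::field \<Rightarrow> 'a" where
  "rtr b K w = (\<Sum>j<K. w ^ (b ^ j))"

lemma rtr_pow:
  fixes w :: "'a::field"
  assumes "CHAR('a) = p" "prime p"
  shows "rtr b K (w ^ p) = rtr b K w ^ p"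
proof -
  have "rtr b K w ^ p = (\<Sum>j<K. (w ^ (b ^ j)) ^ p)"
    using frob_sum[OF assms, of "\<lambda>j. w ^ (b ^ j)" "{..<K}" 1] by (simp add: rtr_def)
  also have "\<dots> = rtr b K (w ^ p)"
    by (simp add: rtr_def flip: power_mult) (simp add: mult.commute)
  finally show ?thesis by simp
qed

lemma rtr_descent:
  fixes w :: "'a::field"
  assumes "CHAR('a) = p" "prime p"
  shows "0 < i \<Longrightarrow> rtr b K (w ^ i) \<noteq> 0 \<Longrightarrow> \<exists>i'. 0 < i' \<and> i' \<le> i \<and> \<not> p dvd i' \<and> rtr b K (w ^ i') \<noteq> 0"
proof (induction i rule: less_induct)
  case (less i)
  show ?case
  proof (cases "p dvd i")
    case False thus ?thesis using less.prems by blast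
  next
    case True
    then obtain j where j: "i = j * p" by (metis dvdE mult.commute)
    have "rtr b K (w ^ i) = rtr b K (w ^ j) ^ p"
      using rtr_pow[OF assms, of b K "w ^ j"] by (simp add: j power_mult)
    hence nz: "rtr b K (w ^ j) \<noteq> 0" using less.prems prime_gt_0_nat[OF assms(2)] by auto
    have "0 < j" using less.prems j by (cases j) auto
    moreover have "j < i" using j \<open>0 < j\<close> prime_gt_1_nat[OF assms(2)] by simp
    ultimately obtain i' where "0 < i' \<and> i' \<le> j \<and> \<not> p dvd i' \<and> rtr b K (w ^ i') \<noteq> 0"
      using less.IH nz by blast
    thus ?thesis using \<open>j < i\<close> by (meson less_imp_le order_trans)
  qed
qed

lemma trace_periodic_zero:
  fixes y :: "'a::field"
  assumes "CHAR('a) = p" "prime p" "y ^ (p ^ k) = y"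
  shows "abs_trace p (p * k) y = 0"
proof -
  have "y ^ (p ^ (i + k)) = y ^ (p ^ i)" for i
  proof -
    have "y ^ (p ^ (i + k)) = (y ^ (p ^ k)) ^ (p ^ i)" by (simp add: power_add mult.commute flip: power_mult)
    thus ?thesis using assms(3) by simp
  qed
  hence "abs_trace p (p * k) y = of_nat p * (\<Sum>i<k. y ^ (p ^ i))"
    unfolding abs_trace_def by (rule sum_periodic)
  thus ?thesis using assms(1) of_nat_CHAR[where 'a='a] by simp
qed


lemma exists_i:
  fixes \<alpha> :: "'a::field"
  assumes ch: "CHAR('a) = p" "prime p" and a0: "\<alpha> \<noteq> 0" and ar: "\<alpha> ^ (q ^ r) = \<alpha>" and r0: "0 < r"
    and nsub: "\<not> (p dvd r \<and> \<alpha> ^ (q ^ (r div p)) = \<alpha>)"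
  shows "\<exists>i. 0 < i \<and> i \<le> r \<and> \<not> p dvd i \<and> rtr q r (\<alpha> ^ i) \<noteq> 0"
proof -
  define g where "g j = \<alpha> ^ (q ^ j)" for j
  have gshift: "g (j + t) = g j ^ (q ^ t)" for j t
    by (simp add: g_def power_add flip: power_mult)
  define m where "m = (LEAST m. 0 < m \<and> g m = \<alpha>)"
  have ex: "0 < r \<and> g r = \<alpha>" using r0 ar by (simp add: g_def)
  have m: "0 < m \<and> g m = \<alpha>" unfolding m_def by (rule LeastI[of _ r]) (rule ex)
  have mr: "m \<le> r" unfolding m_def by (rule Least_le) (rule ex)
  have mmin: "\<not> (0 < m' \<and> g m' = \<alpha>)" if "m' < m" for m'
    using not_less_Least[of m' "\<lambda>m. 0 < m \<and> g m = \<alpha>"] that unfolding m_def by blast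
  have g0: "g 0 = \<alpha>" by (simp add: g_def)
  have gper: "g (j + m) = g j" for j
  proof -
    have "g (j + m) = g (m + j)" by (simp add: add.commute)
    also have "\<dots> = g m ^ (q ^ j)" by (rule gshift)
    also have "\<dots> = g j" using m by (simp add: g_def)
    finally show ?thesis .
  qed
  have gper2: "g (j + k * m) = g j" for j k
    by (induction k) (simp_all add: gper add.assoc[symmetric] add.commute[of m])
  have mdvd: "m dvd r"
  proof (rule ccontr)
    assume "\<not> m dvd r"
    hence pos: "0 < r mod m" using mod_eq_0_iff_dvd by auto
    have "g (r mod m) = g (r mod m + (r div m) * m)" by (rule gper2[symmetric])
    also have "r mod m + (r div m) * m = r" by simp
    finally have "g (r mod m) = \<alpha>" using ex by simp
    moreover have "r mod m < m" using m by simp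
    ultimately show False using mmin pos by blast
  qed
  have dist: "g j \<noteq> g j'" if "j < j'" "j' < m" for j j'
  proof
    assume eq: "g j = g j'"
    have "g (j + (m - j')) = g (j' + (m - j'))" by (simp add: gshift eq)
    also have "j' + (m - j') = m" using that by simp
    finally have "g (j + (m - j')) = \<alpha>" using m by simp
    moreover have "0 < j + (m - j')" "j + (m - j') < m" using that by auto
    ultimately show False using mmin by blast
  qed
  define H where "H = (\<Prod>j\<in>{1..<m}. [:- g j, 1:])"
  define G where "G = pCons 0 H"
  have degH: "degree H \<le> m - 1"
  proof -
    have "degree H \<le> sum (degree \<circ> (\<lambda>j. [:- g j, 1:])) {1..<m}"
      unfolding H_def by (rule degree_prod_sum_le) simp
    also have "\<dots> = m - 1" by simp
    finally show ?thesis .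
  qed
  have degG: "degree G \<le> m"
  proof -
    have "degree G \<le> Suc (degree H)" unfolding G_def by (rule degree_pCons_le)
    thus ?thesis using degH m by linarith
  qed
  have polyG: "poly G y = y * (\<Prod>j\<in>{1..<m}. y - g j)" for y
    by (simp add: G_def H_def poly_prod)
  have "(\<Sum>j<m. poly G (g j)) = (\<Sum>j\<in>{0}. poly G (g j))"
  proof (rule sum.mono_neutral_right)
    show "\<forall>j\<in>{..<m} - {0}. poly G (g j) = 0"
    proof
      fix j assume "j \<in> {..<m} - {0}"
      hence "j \<in> {1..<m}" by auto
      thus "poly G (g j) = 0" unfolding polyG by (auto intro!: prod_zero[OF finite_atLeastLessThan])
    qed
  qed (use m in auto)
  also have "\<dots> = poly G \<alpha>" using g0 by simp
  also have "\<dots> \<noteq> 0"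
  proof -
    have "(\<Prod>j\<in>{1..<m}. \<alpha> - g j) \<noteq> 0"
    proof
      assume "(\<Prod>j\<in>{1..<m}. \<alpha> - g j) = 0"
      then obtain j where "j \<in> {1..<m}" "\<alpha> - g j = 0" by auto
      thus False using dist[of 0 j] g0 by auto
    qed
    thus ?thesis using a0 polyG by simp
  qed
  finally have S: "(\<Sum>j<m. poly G (g j)) \<noteq> 0" .
  have "(\<Sum>j<m. poly G (g j)) = (\<Sum>j<m. \<Sum>i\<le>degree G. coeff G i * g j ^ i)"
    by (simp add: poly_altdef)
  also have "\<dots> = (\<Sum>i\<le>degree G. coeff G i * (\<Sum>j<m. g j ^ i))"
    by (subst sum.swap) (simp add: sum_distrib_left)
  finally have "(\<Sum>i\<le>degree G. coeff G i * (\<Sum>j<m. g j ^ i)) \<noteq> 0" using S by simp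
  then obtain i where i: "i \<le> degree G" "coeff G i * (\<Sum>j<m. g j ^ i) \<noteq> 0"
    using sum.neutral[of "{..degree G}" "\<lambda>i. coeff G i * (\<Sum>j<m. g j ^ i)"] by fastforce
  have i0: "0 < i" using i(2) by (cases i) (auto simp: G_def)
  have im: "i \<le> m" using i(1) degG by simp
  have nz: "(\<Sum>j<m. g j ^ i) \<noteq> 0" using i(2) by auto
  have rtr_eq: "rtr q r (\<alpha> ^ i) = of_nat (r div m) * (\<Sum>j<m. g j ^ i)"
  proof -
    have "rtr q r (\<alpha> ^ i) = (\<Sum>j<(r div m) * m. g j ^ i)"
      using mdvd by (simp add: rtr_def g_def flip: power_mult) (simp add: mult.commute)
    also have "\<dots> = of_nat (r div m) * (\<Sum>j<m. g j ^ i)"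
      by (rule sum_periodic) (simp add: gper)
    finally show ?thesis .
  qed
  have "\<not> p dvd (r div m)"
  proof
    assume pd: "p dvd (r div m)"
    then obtain t where t: "r div m = p * t" by (auto elim: dvdE)
    have r_eq: "r = p * (t * m)" using t mdvd by (metis dvd_div_mult_self mult.assoc)
    hence "p dvd r" by simp
    moreover have "r div p = t * m" using r_eq prime_gt_0_nat[OF ch(2)] by simp
    moreover have "g (t * m) = \<alpha>" using gper2[of 0 t] g0 by simp
    ultimately show False using nsub by (simp add: g_def)
  qed
  hence "of_nat (r div m) \<noteq> (0::'a)" using ch(1) of_nat_eq_0_iff_char_dvd by metis
  hence "rtr q r (\<alpha> ^ i) \<noteq> 0" using rtr_eq nz by simp
  then obtain i' where "0 < i' \<and> i' \<le> i \<and> \<not> p dvd i' \<and> rtr q r (\<alpha> ^ i') \<noteq> 0"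
    using rtr_descent[OF ch i0] by blast
  thus ?thesis using im mr by (meson order_trans)
qed


lemma trace_decomp:
  fixes w :: "'a::field"
  assumes ch: "CHAR('a) = p" "prime p" and q: "q = p ^ n"
  shows "abs_trace p (n * r) w = (\<Sum>k<n. rtr q r w ^ (p ^ k))"
proof -
  have "abs_trace p (n * r) w = (\<Sum>i<r * n. w ^ (p ^ i))" by (simp add: abs_trace_def mult.commute)
  also have "\<dots> = (\<Sum>j<r. \<Sum>i\<in>{j*n..<j*n+n}. w ^ (p ^ i))" by (rule sum.nat_group[symmetric])
  also have "\<dots> = (\<Sum>j<r. \<Sum>k<n. w ^ (p ^ (k + j*n)))"
  proof (rule sum.cong[OF refl])
    fix j show "(\<Sum>i\<in>{j*n..<j*n+n}. w ^ (p ^ i)) = (\<Sum>k<n. w ^ (p ^ (k + j*n)))"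
      using sum.shift_bounds_nat_ivl[of "\<lambda>i. w ^ (p ^ i)" 0 "j*n" n] by (simp add: atLeast0LessThan add.commute)
  qed
  also have "\<dots> = (\<Sum>k<n. \<Sum>j<r. (w ^ (q ^ j)) ^ (p ^ k))"
    by (subst sum.swap) (simp add: q power_add power_mult mult.commute flip: power_mult)
  also have "\<dots> = (\<Sum>k<n. rtr q r w ^ (p ^ k))"
    by (simp add: rtr_def frob_sum[OF ch])
  finally show ?thesis .
qed

lemma exists_trace_nonzero:
  fixes dummy :: "'a::{field,finite}"
  assumes "prime p" "card (UNIV :: 'a set) = p ^ K" "0 < K"
  shows "\<exists>z::'a. abs_trace p K z \<noteq> 0"
proof (rule ccontr)
  assume H: "\<not> ?thesis"
  define P :: "'a poly" where "P = (\<Sum>i<K. monom 1 (p ^ i))"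
  have polyP: "poly P z = abs_trace p K z" for z by (simp add: P_def abs_trace_def poly_sum poly_monom)
  have p1: "1 < p" using assms(1) prime_gt_1_nat by blast
  have "coeff P 1 = (\<Sum>i<K. if p ^ i = 1 then 1 else 0)" by (simp add: P_def coeff_sum coeff_monom eq_commute)
  also have "\<dots> = (\<Sum>i\<in>{0}. if p ^ i = 1 then (1::'a) else 0)"
    by (rule sum.mono_neutral_right) (use assms(3) p1 in auto)
  finally have "coeff P 1 = 1" by simp
  hence P0: "P \<noteq> 0" by auto
  have "degree P \<le> p ^ (K - 1)"
    unfolding P_def
  proof (rule degree_sum_le)
    fix i assume "i \<in> {..<K}"
    hence "p ^ i \<le> p ^ (K - 1)" using p1 by (intro power_increasing) auto
    thus "degree (monom (1::'a) (p ^ i)) \<le> p ^ (K - 1)" using degree_monom_le order_trans by blast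
  qed simp
  moreover have "card {x. poly P x = 0} \<le> degree P" by (rule card_poly_roots_bound[OF P0])
  moreover have "{x. poly P x = 0} = UNIV" using H polyP by auto
  moreover have "p ^ (K - 1) < p ^ K" using p1 assms(3) by (intro power_strict_increasing) auto
  ultimately show False using assms(2) by simp
qed


lemma shift_mem:
  fixes f :: "'a::field poly"
  assumes ch: "CHAR('a) = p" "prime p" and q: "q = p ^ n"
    and f: "f \<in> poly_family p q d" and i: "i < d" "\<not> p dvd i" and b: "b ^ q = b"
  shows "f + monom b i \<in> poly_family p q d"
proof -
  have fd: "degree f = d" "coeff f d \<noteq> 0" "\<And>k. coeff f k ^ q = coeff f k"
    "\<And>k. p dvd k \<Longrightarrow> coeff f k = 0"
    using f by (auto simp: poly_family_def subfield_of_order_def)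
  have cf: "coeff (f + monom b i) k = coeff f k + (if i = k then b else 0)" for k
    by (simp add: coeff_monom)
  have "degree (monom b i) < degree f" using degree_monom_le[of b i] i fd(1) by linarith
  hence deg: "degree (f + monom b i) = d" using fd(1) by (simp add: degree_add_eq_left)
  have "coeff (f + monom b i) k ^ q = coeff (f + monom b i) k" for k
  proof -
    have "(coeff f k + (if i = k then b else 0)) ^ q = coeff f k ^ q + (if i = k then b else 0) ^ q"
      using frob_add[OF ch] q by simp
    also have "\<dots> = coeff f k + (if i = k then b else 0)"
      using fd(3)[of k] b by (cases "i = k") (simp_all add: q prime_gt_0_nat[OF ch(2)])
    finally show ?thesis by (simp add: cf)
  qed
  moreover have "coeff (f + monom b i) k = 0" if "p dvd k" for k
    using that i(2) fd(4)[OF that] by (auto simp: cf)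
  moreover have "coeff (f + monom b i) d \<noteq> 0" using fd(2) i(1) by (simp add: cf)
  ultimately show ?thesis using deg by (simp add: poly_family_def subfield_of_order_def)
qed

lemma family_finite:
  "finite (poly_family p q d :: 'a::{field,finite} poly set)"
proof -
  have "poly_family p q d \<subseteq> Poly ` {xs::'a list. set xs \<subseteq> UNIV \<and> length xs = Suc d}"
  proof
    fix f :: "'a poly" assume "f \<in> poly_family p q d"
    hence "f \<noteq> 0" "degree f = d" by (auto simp: poly_family_def)
    hence "length (coeffs f) = Suc d" by (simp add: length_coeffs_degree)
    thus "f \<in> Poly ` {xs::'a list. set xs \<subseteq> UNIV \<and> length xs = Suc d}"
      by (intro image_eqI[of _ _ "coeffs f"]) auto
  qed
  moreover have "finite {xs::'a list. set xs \<subseteq> UNIV \<and> length xs = Suc d}"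
    by (rule finite_lists_length_eq) simp
  ultimately show ?thesis by (meson finite_imageI finite_subset)
qed

lemma family_nonempty:
  assumes "prime p" "coprime d p" "0 < q"
  shows "monom (1::'a::field) d \<in> poly_family p q d"
proof -
  have nd: "\<not> p dvd d"
  proof
    assume "p dvd d"
    hence "is_unit p" using assms(2) coprime_common_divisor[of d p p] by simp
    thus False using assms(1) by simp
  qed
  have c1: "coeff (monom (1::'a) d) i ^ q = coeff (monom (1::'a) d) i" for i
    using assms(3) by (simp add: coeff_monom)
  have c2: "coeff (monom (1::'a) d) i = 0" if "p dvd i" for i
    using that nd by (auto simp: coeff_monom)
  have c3: "degree (monom (1::'a) d) = d" by (simp add: degree_monom_eq)
  show ?thesis unfolding poly_family_def subfield_of_order_def using c1 c2 c3 by simp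
qed


lemma rtr_smult:
  fixes a w :: "'a::field"
  assumes "a ^ q = a"
  shows "rtr q r (a * w) = a * rtr q r w"
  unfolding rtr_def by (simp add: sum_distrib_left power_mult_distrib fix_iter[OF assms])

theorem lemma2:
  fixes p n q d r :: nat and \<psi> :: "'a::{field,finite} \<Rightarrow> complex" and \<alpha> :: 'a
  assumes "prime p" and "0 < n" and "q = p ^ n"
    and "coprime d p"
    and "0 < r" and "r < d"
    and "card (UNIV :: 'a set) = q ^ r"
    and "additive_char_prime_field p \<psi>" and "nontrivial_on_prime_field p \<psi>"
  shows "(\<Sum>f\<in>poly_family p q d. \<psi> (abs_trace p (n * r) (poly f \<alpha>)))
           / of_nat (card (poly_family p q d :: 'a poly set))
         = (if \<alpha> = 0 \<or> (p dvd r \<and> \<alpha> \<in> subfield_of_order (q ^ (r div p))) then 1 else 0)"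
proof -
  note pr = assms(1) and qdef = assms(3)
  define F where "F = (poly_family p q d :: 'a poly set)"
  define Tr :: "'a \<Rightarrow> 'a" where "Tr = abs_trace p (n * r)"
  have cardN: "card (UNIV :: 'a set) = p ^ (n * r)" using assms(7) qdef by (simp add: power_mult)
  have ch: "CHAR('a) = p" by (rule ff_char[OF pr cardN])
  have p0: "0 < p" using prime_gt_0_nat[OF pr] .
  have q0: "0 < q" using qdef p0 by simp
  have ferm: "x ^ (q ^ r) = x" for x :: 'a using ff_pow_card[of x] assms(7) by simp
  have fermp: "x ^ (p ^ (n * r)) = x" for x :: 'a using ff_pow_card[of x] cardN by simp
  have finF: "finite F" unfolding F_def by (rule family_finite)
  have cardF: "card F \<noteq> 0"
    using family_nonempty[OF pr assms(4) q0, where 'a='a] finF by (auto simp: F_def)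
  have psi_add: "\<psi> (x + y) = \<psi> x * \<psi> y" if "x ^ p = x" "y ^ p = y" for x y
    using assms(8) that by (simp add: additive_char_prime_field_def subfield_of_order_def)
  have psi0: "\<psi> 0 = 1"
  proof -
    have "(0::'a) ^ p = 0" using p0 by simp
    hence "\<psi> 0 = \<psi> 0 * \<psi> 0" "\<psi> 0 \<noteq> 0" using psi_add[of 0 0] assms(8)
      by (auto simp: additive_char_prime_field_def subfield_of_order_def)
    thus ?thesis by (metis mult_cancel_left2)
  qed
  have TrFp: "Tr y ^ p = Tr y" for y
    using tr_fix[OF ch pr, of p 1 y "n * r"] fermp[of y] by (simp add: Tr_def abs_trace_def)
  have Tr_add: "Tr (u + v) = Tr u + Tr v" for u v
    by (simp add: Tr_def abs_trace_def frob_add[OF ch pr] sum.distrib)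
  have psiTr: "\<psi> (Tr (u + v)) = \<psi> (Tr u) * \<psi> (Tr v)" for u v
    using psi_add[OF TrFp TrFp] Tr_add by simp
  have Tr0: "Tr 0 = 0" unfolding Tr_def abs_trace_def by (rule sum.neutral) (simp add: p0 zero_power)
  show ?thesis
  proof (cases "\<alpha> = 0 \<or> (p dvd r \<and> \<alpha> \<in> subfield_of_order (q ^ (r div p)))")
    case True
    have allz: "Tr (poly f \<alpha>) = 0" if "f \<in> F" for f
    proof (cases "\<alpha> = 0")
      case True
      have "coeff f 0 = 0" using \<open>f \<in> F\<close> by (simp add: F_def poly_family_def)
      thus ?thesis using True Tr0 by (simp add: poly_0_coeff_0)
    next
      case False
      with True have pr_: "p dvd r" "\<alpha> ^ (q ^ (r div p)) = \<alpha>" by (auto simp: subfield_of_order_def)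
      define k where "k = n * (r div p)"
      have qk: "q ^ (r div p) = p ^ k" by (simp add: k_def qdef power_mult)
      have nr: "n * r = p * k" using pr_(1) by (simp add: k_def)
      have ak: "\<alpha> ^ (p ^ k) = \<alpha>" using pr_(2) qk by simp
      have cq: "coeff f i ^ q = coeff f i" for i
        using \<open>f \<in> F\<close> by (simp add: F_def poly_family_def subfield_of_order_def)
      have ck: "coeff f i ^ (p ^ k) = coeff f i" for i
        using fix_iter[OF cq[of i], of "r div p"] qk by simp
      have "poly f \<alpha> ^ (p ^ k) = (\<Sum>i\<le>degree f. (coeff f i * \<alpha> ^ i) ^ (p ^ k))"
        by (simp add: poly_altdef frob_sum[OF ch pr])
      also have "\<dots> = poly f \<alpha>"
      proof -
        have aik: "(\<alpha> ^ j) ^ (p ^ k) = \<alpha> ^ j" for j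
          by (metis ak power_mult mult.commute)
        show ?thesis by (simp add: poly_altdef power_mult_distrib ck aik)
      qed
      finally have "poly f \<alpha> ^ (p ^ k) = poly f \<alpha>" .
      thus ?thesis unfolding Tr_def nr by (rule trace_periodic_zero[OF ch pr])
    qed
    have "(\<Sum>f\<in>F. \<psi> (Tr (poly f \<alpha>))) = (\<Sum>f\<in>F. 1)"
      using allz psi0 by simp
    hence "(\<Sum>f\<in>F. \<psi> (Tr (poly f \<alpha>))) = of_nat (card F)" by simp
    thus ?thesis using True cardF by (simp add: F_def Tr_def)
  next
    case False
    hence a0: "\<alpha> \<noteq> 0" and nsub: "\<not> (p dvd r \<and> \<alpha> ^ (q ^ (r div p)) = \<alpha>)"
      by (auto simp: subfield_of_order_def)
    obtain i where i: "0 < i" "i \<le> r" "\<not> p dvd i" "rtr q r (\<alpha> ^ i) \<noteq> 0"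
      using exists_i[OF ch pr a0 ferm assms(5) nsub] by blast
    define \<gamma> where "\<gamma> = rtr q r (\<alpha> ^ i)"
    have gq: "\<gamma> ^ q = \<gamma>"
      using tr_fix[OF ch pr qdef, of "\<alpha> ^ i" r] ferm[of "\<alpha> ^ i"] by (simp add: \<gamma>_def rtr_def)
    obtain z where z: "Tr z \<noteq> 0"
      using exists_trace_nonzero[OF pr cardN] assms(2,5) by (auto simp: Tr_def)
    define c where "c = rtr q r z"
    have cq: "c ^ q = c"
      using tr_fix[OF ch pr qdef, of z r] ferm[of z] by (simp add: c_def rtr_def)
    define t where "t = (\<Sum>k<n. c ^ (p ^ k))"
    have Trdec: "Tr w = (\<Sum>k<n. rtr q r w ^ (p ^ k))" for w
      unfolding Tr_def by (rule trace_decomp[OF ch pr qdef])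
    have t0: "t \<noteq> 0" using z Trdec[of z] by (simp add: t_def c_def)
    have tp: "t ^ p = t"
      using tr_fix[OF ch pr, of p 1 c n] cq qdef by (simp add: t_def)
    obtain x0 where x0: "x0 ^ p = x0" "\<psi> x0 \<noteq> 1"
      using assms(9) by (auto simp: nontrivial_on_prime_field_def subfield_of_order_def)
    define lam where "lam = x0 / t"
    have lp: "lam ^ p = lam" by (simp add: lam_def power_divide x0 tp)
    have lq: "lam ^ q = lam" using fix_iter[OF lp, of n] qdef by simp
    define a where "a = lam * c / \<gamma>"
    have aq: "a ^ q = a" by (simp add: a_def power_divide power_mult_distrib lq cq gq)
    have "Tr (a * \<alpha> ^ i) = (\<Sum>k<n. (lam * c) ^ (p ^ k))"
      using Trdec[of "a * \<alpha> ^ i"] rtr_smult[OF aq, of r "\<alpha> ^ i"] i(4)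
      by (simp add: a_def \<gamma>_def)
    also have "\<dots> = lam * t"
      by (simp add: t_def sum_distrib_left power_mult_distrib fix_iter[OF lp])
    also have "\<dots> = x0" using t0 by (simp add: lam_def)
    finally have Tra: "Tr (a * \<alpha> ^ i) = x0" .
    have naq: "(- a) ^ q = - a" using frob_neg[OF ch pr, of a n] aq qdef by simp
    have idp: "i < d" using i(2) assms(6) by simp
    define S where "S = (\<Sum>f\<in>F. \<psi> (Tr (poly f \<alpha>)))"
    have "(\<Sum>f\<in>F. \<psi> (Tr (poly (f + monom a i) \<alpha>))) = S"
      unfolding S_def
    proof (rule sum.reindex_bij_witness[of _ "\<lambda>f. f + monom (- a) i" "\<lambda>f. f + monom a i"])
      fix f assume "f \<in> F"
      show "f + monom a i + monom (- a) i = f" by (simp add: add.assoc add_monom)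
      show "f + monom a i \<in> F" using shift_mem[OF ch pr qdef _ idp i(3) aq] \<open>f \<in> F\<close> by (simp add: F_def)
      show "f + monom (- a) i + monom a i = f" by (simp add: add.assoc add_monom)
      show "f + monom (- a) i \<in> F" using shift_mem[OF ch pr qdef _ idp i(3) naq] \<open>f \<in> F\<close> by (simp add: F_def)
      show "\<psi> (Tr (poly (f + monom a i) \<alpha>)) = \<psi> (Tr (poly (f + monom a i) \<alpha>))" ..
    qed
    moreover have "(\<Sum>f\<in>F. \<psi> (Tr (poly (f + monom a i) \<alpha>))) = S * \<psi> x0"
      by (simp add: S_def sum_distrib_right poly_monom psiTr Tra)
    ultimately have "S = S * \<psi> x0" by simp
    hence "S = 0" using x0(2) by (metis mult.right_neutral mult_left_cancel)
    thus ?thesis using False by (simp add: S_def F_def Tr_def)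
  qed
qed

end
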